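(* Let $n\ge3$. A set $A$ of vertices of $C_n$ is maximally even if and only if $A$ is a maximizer of the function $F(A)=\prod_{\{u,v\}\subseteq A,\,u\neq v} d(u,v)$ (product over unordered pairs of distinct vertices of $A$), i.e. $F(A)=\max\{F(B): B\subseteq V(C_n),\ |B|=|A|\}$.
   Context: The cycle $C_n$ has vertex set $\{0,\dots,n-1\}$ with $i$ adjacent to $i+1\bmod n$; $d(u,v)$ is geodesic distance and $d^*(u,v)$ is the least non-negative integer congruent to $v-u$ mod $n$. For $A=\{a_0<\dots<a_{m-1}\}$, $\mathrm{span}_A(a_i,a_j)$ is the least positive integer congruent to $j-i$ mod $m$, and $\sigma^*_k(A)=[\,d^*(u,v): u,v\in A,u\ne v,\mathrm{span}_A(u,v)=k\,]$ (multiset). $A$ is maximally even if for each $1\le k\le m-1$ the set of values of $\sigma^*_k(A)$ is a single integer or two consecutive integers. *)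

theory Defs
  imports Main
begin

text \<open>Cycle C_n on vertex set {0..<n}; i adjacent to (i+1) mod n.\<close>

definition cyc_dist :: "nat \<Rightarrow> nat \<Rightarrow> nat \<Rightarrow> nat" where
  "cyc_dist n u v = (let k = (if u \<le> v then v - u else u - v) in min k (n - k))"

definition dir_dist :: "nat \<Rightarrow> nat \<Rightarrow> nat \<Rightarrow> nat" where
  "dir_dist n u v = nat ((int v - int u) mod int n)"

definition rank_in :: "nat set \<Rightarrow> nat \<Rightarrow> nat" where
  "rank_in A a = card {x \<in> A. x < a}"

definition span_in :: "nat set \<Rightarrow> nat \<Rightarrow> nat \<Rightarrow> nat" where
  "span_in A u v =
     (let m = card A; r = nat ((int (rank_in A v) - int (rank_in A u)) mod int m)
      in if r = 0 then m else r)"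

text \<open>Set of values of the multiset sigma*_k(A).\<close>
definition sigma_vals :: "nat \<Rightarrow> nat set \<Rightarrow> nat \<Rightarrow> nat set" where
  "sigma_vals n A k = {dir_dist n u v | u v. u \<in> A \<and> v \<in> A \<and> u \<noteq> v \<and> span_in A u v = k}"

definition maximally_even :: "nat \<Rightarrow> nat set \<Rightarrow> bool" where
  "maximally_even n A \<longleftrightarrow>
     (\<forall>k. 1 \<le> k \<and> k \<le> card A - 1 \<longrightarrow> (\<exists>c. sigma_vals n A k \<subseteq> {c, c + 1}))"

definition dist_prod :: "nat \<Rightarrow> nat set \<Rightarrow> nat" where
  "dist_prod n A = (\<Prod>(u, v) \<in> {(u, v). u \<in> A \<and> v \<in> A \<and> u < v}. cyc_dist n u v)"

end

theory Submission
  imports Defs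
begin

definition fd :: "nat \<Rightarrow> nat \<Rightarrow> nat" where "fd n s = min s (n - s)"

lemma fd_step0:
  fixes a c d :: nat
  assumes "1 \<le> a"
  shows "min a (d+c+3) * min (a+d+2) (c+1) < min (a+1) (d+c+2) * min (a+d+1) (c+2)"
proof -
  consider "a \<le> d+c+2" "a+d+2 \<le> c+1" | "a \<le> d+c+2" "a+d+2 > c+1" "a + d + 1 \<le> c + 2" |
      "a \<le> d+c+2" "a + d + 1 > c + 2" | "a > d + c + 2" by linarith
  then show ?thesis
  proof cases
    case 1
    then show ?thesis using assms by (simp add: min_def algebra_simps)
  next
    case 2
    have "a*c \<le> a*(a+d)" using 2 by simp
    then show ?thesis using assms 2 by (simp add: min_def algebra_simps)
  next
    case 3
    show ?thesis
    proof (cases "a = d+c+2")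
      case True
      then show ?thesis using 3 by (simp add: min_def algebra_simps)
    next
      case False
      then show ?thesis using 3 assms by (simp add: min_def algebra_simps)
    qed
  next
    case 4
    show ?thesis
    proof (cases "a = d+c+3")
      case True
      then show ?thesis using 4 by (simp add: min_def algebra_simps)
    next
      case False
      have "(d+c+3) \<le> a" using 4 by simp
      then have "(c+1)*(d+c+3) \<le> a*(c+1)" by (metis mult.commute mult_le_mono2)
      then show ?thesis using False 4 assms by (simp add: min_def algebra_simps)
    qed
  qed
qed

lemma fd_step:
  assumes "1 \<le> a" "a + 2 \<le> b" "b + 1 \<le> n"
  shows "fd n a * fd n b < fd n (a+1) * fd n (b-1)"
proof -
  obtain d where d: "b = a + 2 + d" using assms le_Suc_ex by blast
  obtain c where c: "n = b + 1 + c" using assms le_Suc_ex by blast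
  have "n - a = d+c+3" "n - b = c + 1" "n - (a+1) = d+c+2" "n - (b-1) = c+2" "b - 1 = a+d+1"
    using c d by auto
  then show ?thesis unfolding fd_def using fd_step0[OF assms(1), of d c] d by simp
qed

lemma fd_pos: "1 \<le> s \<Longrightarrow> s + 1 \<le> n \<Longrightarrow> 0 < fd n s"
  unfolding fd_def by simp

definition bal :: "nat \<Rightarrow> (nat \<Rightarrow> nat) \<Rightarrow> bool" where
  "bal m x \<longleftrightarrow> (\<exists>c. \<forall>i<m. x i = c \<or> x i = c+1)"

lemma bal_formula:
  fixes g :: "nat \<Rightarrow> nat"
  assumes "m > 0" "bal m x"
  shows "(\<Prod>i<m. g (x i)) = g ((\<Sum>i<m. x i) div m) ^ (m - (\<Sum>i<m. x i) mod m)
            * g ((\<Sum>i<m. x i) div m + 1) ^ ((\<Sum>i<m. x i) mod m)"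
proof -
  obtain c where c: "\<forall>i<m. x i = c \<or> x i = c+1" using assms unfolding bal_def by blast
  define X where "X = {..<m} \<inter> {i. x i = c+1}"
  define r where "r = card X"
  have cX: "card ({..<m} \<inter> - {i. x i = c+1}) = m - r"
  proof -
    have "{..<m} \<inter> - {i. x i = c+1} = {..<m} - X" unfolding X_def by auto
    moreover have "X \<subseteq> {..<m}" unfolding X_def by auto
    ultimately show ?thesis unfolding r_def by (simp add: card_Diff_subset finite_subset)
  qed
  have rm: "r \<le> m" unfolding r_def X_def by (metis card_lessThan card_mono finite_lessThan inf_le1)
  have p: "(\<Prod>i<m. g (x i)) = g (c+1) ^ r * g c ^ (m - r)"
  proof -
    have "(\<Prod>i<m. g (x i)) = (\<Prod>i\<in>{..<m}. if x i = c+1 then g (c+1) else g c)"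
      by (rule prod.cong) (use c in auto)
    also have "\<dots> = g (c+1) ^ card X * g c ^ card ({..<m} \<inter> - {i. x i = c+1})"
      by (simp add: prod.If_cases X_def)
    also have "\<dots> = g (c+1) ^ r * g c ^ (m - r)" using cX r_def by simp
    finally show ?thesis .
  qed
  have s: "(\<Sum>i<m. x i) = c * m + r"
  proof -
    have "(\<Sum>i<m. x i) = (\<Sum>i\<in>{..<m}. if x i = c+1 then c+1 else c)"
      by (rule sum.cong) (use c in auto)
    also have "\<dots> = (c+1) * card X + c * card ({..<m} \<inter> - {i. x i = c+1})"
      by (simp add: sum.If_cases X_def)
    also have "\<dots> = (c+1) * r + c * (m - r)" using cX r_def by simp
    also have "\<dots> = c * m + r" using rm by (simp add: algebra_simps diff_mult_distrib2)
    finally show ?thesis .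
  qed
  show ?thesis
  proof (cases "r < m")
    case True
    have "(c*m + r) div m = c" "(c*m+r) mod m = r" using True by auto
    then show ?thesis using p s by (simp add: mult.commute)
  next
    case False
    then have "r = m" using rm by simp
    moreover have "(c*m + m) div m = c+1" "(c*m+m) mod m = 0" using assms(1) by (auto simp: algebra_simps)
    ultimately show ?thesis using p s by simp
  qed
qed

lemma split2:
  fixes h :: "nat \<Rightarrow> 'b::comm_monoid_mult"
  assumes "finite A" "i \<in> A" "j \<in> A" "i \<noteq> j"
  shows "prod h A = h i * h j * prod h (A - {i,j})"
proof -
  have "prod h A = h i * prod h (A - {i})" using assms by (simp add: prod.remove)
  also have "prod h (A - {i}) = h j * prod h (A - {i} - {j})" using assms by (simp add: prod.remove)
  also have "A - {i} - {j} = A - {i,j}" by auto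
  finally show ?thesis by (simp add: mult.assoc)
qed

lemma split2s:
  fixes h :: "nat \<Rightarrow> 'b::comm_monoid_add"
  assumes "finite A" "i \<in> A" "j \<in> A" "i \<noteq> j"
  shows "sum h A = h i + h j + sum h (A - {i,j})"
proof -
  have "sum h A = h i + sum h (A - {i})" using assms by (simp add: sum.remove)
  also have "sum h (A - {i}) = h j + sum h (A - {i} - {j})" using assms by (simp add: sum.remove)
  also have "A - {i} - {j} = A - {i,j}" by auto
  finally show ?thesis by (simp add: add.assoc)
qed

lemma bal_main:
  assumes "m > 0" "bal m x"
    and rx: "\<forall>i<m. 1 \<le> x i \<and> x i + 1 \<le> n"
  shows "(\<forall>i<m. 1 \<le> y i \<and> y i + 1 \<le> n) \<longrightarrow> (\<Sum>i<m. y i) = (\<Sum>i<m. x i) \<longrightarrow>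
     (\<Prod>i<m. fd n (y i)) \<le> (\<Prod>i<m. fd n (x i)) \<and>
     (\<not> bal m y \<longrightarrow> (\<Prod>i<m. fd n (y i)) < (\<Prod>i<m. fd n (x i)))"
proof (induction "\<Sum>i<m. y i ^ 2" arbitrary: y rule: less_induct)
  case less
  show ?case
  proof (intro impI)
    assume ry: "\<forall>i<m. 1 \<le> y i \<and> y i + 1 \<le> n" and sy: "(\<Sum>i<m. y i) = (\<Sum>i<m. x i)"
    show "(\<Prod>i<m. fd n (y i)) \<le> (\<Prod>i<m. fd n (x i)) \<and>
     (\<not> bal m y \<longrightarrow> (\<Prod>i<m. fd n (y i)) < (\<Prod>i<m. fd n (x i)))"
    proof (cases "bal m y")
      case True
      then show ?thesis using bal_formula[OF assms(1) True] bal_formula[OF assms(1,2)] sy by simp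
    next
      case False
      define c where "c = Min (y ` {..<m})"
      have "c \<in> y ` {..<m}" unfolding c_def using assms(1) by (intro Min_in) auto
      then obtain i where i: "i < m" "y i = c" by auto
      have cle: "\<forall>j<m. c \<le> y j" unfolding c_def by simp
      obtain j where j: "j < m" "y j \<noteq> c" "y j \<noteq> c+1" using False unfolding bal_def by blast
      have yj: "y i + 2 \<le> y j" using cle j i by fastforce
      have ij: "i \<noteq> j" using i j by auto
      define y' where "y' = y(i := y i + 1, j := y j - 1)"
      have y'i: "y' i = y i + 1" and y'j: "y' j = y j - 1" using ij unfolding y'_def by auto
      have y'o: "\<And>k. k \<in> {..<m} - {i,j} \<Longrightarrow> y' k = y k" unfolding y'_def by auto
      have fin: "finite {..<m}" and im: "i \<in> {..<m}" and jm: "j \<in> {..<m}" using i j by auto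
      have "y j + 1 \<le> n" using ry j by auto
      then have ry': "\<forall>k<m. 1 \<le> y' k \<and> y' k + 1 \<le> n"
        using ry yj unfolding y'_def by auto
      have rest_s: "(\<Sum>k\<in>{..<m} - {i,j}. y' k) = (\<Sum>k\<in>{..<m} - {i,j}. y k)"
        by (rule sum.cong) (auto simp: y'o)
      have rest_s2: "(\<Sum>k\<in>{..<m} - {i,j}. y' k ^ 2) = (\<Sum>k\<in>{..<m} - {i,j}. y k ^ 2)"
        by (rule sum.cong) (auto simp: y'o)
      have rest_p: "(\<Prod>k\<in>{..<m} - {i,j}. fd n (y' k)) = (\<Prod>k\<in>{..<m} - {i,j}. fd n (y k))"
        by (rule prod.cong) (auto simp: y'o)
      have sy': "(\<Sum>k<m. y' k) = (\<Sum>k<m. x k)"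
        using split2s[OF fin im jm ij, of y'] split2s[OF fin im jm ij, of y] rest_s sy y'i y'j yj
        by simp
      have sq: "(y i + 1)^2 + (y j - 1)^2 < (y i)^2 + (y j)^2"
      proof -
        obtain d where d: "y j = y i + 2 + d" using yj le_Suc_ex by blast
        show ?thesis unfolding d by (simp add: power2_eq_square algebra_simps)
      qed
      have dec: "(\<Sum>k<m. y' k ^ 2) < (\<Sum>k<m. y k ^ 2)"
        using split2s[OF fin im jm ij, of "\<lambda>k. y' k ^ 2"] split2s[OF fin im jm ij, of "\<lambda>k. y k ^ 2"]
          rest_s2 y'i y'j sq by simp
      have IH: "(\<Prod>k<m. fd n (y' k)) \<le> (\<Prod>k<m. fd n (x k))"
        using less(1)[OF dec] ry' sy' by blast
      have pos: "0 < (\<Prod>k\<in>{..<m} - {i,j}. fd n (y k))"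
        using ry by (intro prod_pos) (auto intro: fd_pos)
      have st: "fd n (y i) * fd n (y j) < fd n (y i + 1) * fd n (y j - 1)"
        using fd_step[of "y i" "y j" n] ry i j yj by auto
      have "(\<Prod>k<m. fd n (y k)) < (\<Prod>k<m. fd n (y' k))"
        using split2[OF fin im jm ij, of "\<lambda>k. fd n (y' k)"] split2[OF fin im jm ij, of "\<lambda>k. fd n (y k)"]
          rest_p y'i y'j st pos by simp
      then show ?thesis using IH by simp
    qed
  qed
qed



definition ext :: "nat \<Rightarrow> nat \<Rightarrow> (nat \<Rightarrow> nat) \<Rightarrow> nat \<Rightarrow> nat" where
  "ext n m a t = a (t mod m) + n * (t div m)"

definition xk :: "nat \<Rightarrow> nat \<Rightarrow> (nat \<Rightarrow> nat) \<Rightarrow> nat \<Rightarrow> nat \<Rightarrow> nat" where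
  "xk n m a k i = ext n m a (i + k) - a i"

lemma cyc_fd: "u < n \<Longrightarrow> v < n \<Longrightarrow> cyc_dist n u v = fd n (dir_dist n u v)"
proof -
  assume u: "u < n" and v: "v < n"
  show ?thesis
  proof (cases "u \<le> v")
    case True
    have "(int v - int u) mod int n = int v - int u" using u v True by (intro mod_pos_pos_trivial) auto
    then have "dir_dist n u v = v - u" unfolding dir_dist_def using True by simp
    then show ?thesis unfolding cyc_dist_def fd_def using True by (simp add: Let_def)
  next
    case False
    have "(int v - int u) mod int n = (int v - int u + int n) mod int n" by simp
    also have "\<dots> = int v - int u + int n" using u v False by (intro mod_pos_pos_trivial) auto
    finally have "dir_dist n u v = n - (u - v)" unfolding dir_dist_def using False u by simp
    then show ?thesis unfolding cyc_dist_def fd_def using False u by (simp add: Let_def min.commute)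
  qed
qed

lemma cyc_sym: "cyc_dist n u v = cyc_dist n v u"
  unfolding cyc_dist_def by (simp add: Let_def)

locale enum =
  fixes n m :: nat and a :: "nat \<Rightarrow> nat" and B :: "nat set"
  assumes m0: "0 < m"
    and mono: "\<And>i j. i < j \<Longrightarrow> j < m \<Longrightarrow> a i < a j"
    and img: "a ` {..<m} = B"
    and lt: "\<And>i. i < m \<Longrightarrow> a i < n"
begin

lemma a_less_iff: "i < m \<Longrightarrow> j < m \<Longrightarrow> a i < a j \<longleftrightarrow> i < j"
  using mono by (metis less_asym linorder_neqE_nat)

lemma a_eq_iff: "i < m \<Longrightarrow> j < m \<Longrightarrow> a i = a j \<longleftrightarrow> i = j"
  using mono by (metis less_irrefl linorder_neqE_nat)

lemma inj: "inj_on a {..<m}"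
  unfolding inj_on_def using a_eq_iff by auto

lemma cardB: "card B = m"
  using card_image[OF inj] img by simp

lemma rank: "i < m \<Longrightarrow> rank_in B (a i) = i"
proof -
  assume i: "i < m"
  have "{x \<in> B. x < a i} = a ` {..<i}"
  proof
    show "{x \<in> B. x < a i} \<subseteq> a ` {..<i}" using img a_less_iff i by auto
    show "a ` {..<i} \<subseteq> {x \<in> B. x < a i}" using img mono i by auto
  qed
  moreover have "inj_on a {..<i}" by (rule inj_on_subset[OF inj]) (use i in auto)
  ultimately show ?thesis unfolding rank_in_def by (simp add: card_image)
qed

lemma ext_lt: "i < m \<Longrightarrow> ext n m a i = a i"
  unfolding ext_def by simp

lemma ext_m: "ext n m a (t + m) = ext n m a t + n"
  unfolding ext_def using m0 by (simp add: div_add_self2)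

lemma ext_Suc: "ext n m a t < ext n m a (Suc t)"
proof (cases "Suc (t mod m) = m")
  case True
  have "a (t mod m) < n" using lt m0 by simp
  then show ?thesis using True unfolding ext_def by (simp add: div_Suc mod_Suc)
next
  case False
  have "t mod m < m" using m0 by simp
  then have "Suc (t mod m) < m" using False by simp
  then have "a (t mod m) < a (Suc (t mod m))" using mono by simp
  then show ?thesis using False unfolding ext_def by (simp add: div_Suc mod_Suc)
qed

lemma ext_mono: "t < s \<Longrightarrow> ext n m a t < ext n m a s"
  using lift_Suc_mono_less[of "ext n m a", OF ext_Suc] by blast

lemma xk_bounds:
  assumes "1 \<le> k" "k < m" "i < m"
  shows "1 \<le> xk n m a k i \<and> xk n m a k i + 1 \<le> n"
proof -
  have "ext n m a i < ext n m a (i+k)" using assms by (intro ext_mono) auto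
  moreover have "ext n m a (i+k) < ext n m a (i+m)" using assms by (intro ext_mono) auto
  ultimately show ?thesis unfolding xk_def using ext_lt[OF assms(3)] ext_m[of i] by auto
qed

lemma ext_sum: "(\<Sum>i<m. ext n m a (i + k)) = (\<Sum>i<m. ext n m a i) + k * n"
proof (induction k)
  case 0
  then show ?case by simp
next
  case (Suc k)
  have "(\<Sum>i<m. ext n m a (i + Suc k)) = (\<Sum>i<m. ext n m a (Suc i + k))" by simp
  also have "\<dots> = (\<Sum>i<Suc m. ext n m a (i + k)) - ext n m a k"
    by (simp only: sum.lessThan_Suc_shift) simp
  also have "\<dots> = (\<Sum>i<m. ext n m a (i + k)) + n"
    using ext_m[of k] by (simp add: add.commute)
  finally show ?case using Suc by simp
qed

lemma xk_sum: "k < m \<Longrightarrow> (\<Sum>i<m. xk n m a k i) = k * n"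
proof -
  have "(\<Sum>i<m. xk n m a k i) + (\<Sum>i<m. a i) = (\<Sum>i<m. ext n m a (i + k))"
    unfolding sum.distrib[symmetric]
  proof (rule sum.cong)
    fix i assume "i \<in> {..<m}"
    then have "a i \<le> ext n m a (i+k)" using ext_lt[of i] ext_mono[of i "i+k"]
      by (cases k) auto
    then show "xk n m a k i + a i = ext n m a (i + k)" unfolding xk_def by simp
  qed simp
  moreover have "(\<Sum>i<m. ext n m a i) = (\<Sum>i<m. a i)" by (rule sum.cong) (auto simp: ext_lt)
  ultimately show ?thesis using ext_sum[of k] by simp
qed

lemma key:
  assumes "1 \<le> k" "k < m" "i < m"
  shows "dir_dist n (a i) (a ((i+k) mod m)) = xk n m a k i"
    and "span_in B (a i) (a ((i+k) mod m)) = k"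
proof -
  have "dir_dist n (a i) (a ((i+k) mod m)) = xk n m a k i \<and> span_in B (a i) (a ((i+k) mod m)) = k"
  proof (cases "i + k < m")
    case True
    have e: "ext n m a (i+k) = a (i+k)" using ext_lt[OF True] .
    have lt1: "a i < a (i+k)" using mono True assms by simp
    have "(int (a (i+k)) - int (a i)) mod int n = int (a (i+k)) - int (a i)"
      using lt1 lt[OF True] by (intro mod_pos_pos_trivial) auto
    then have d: "dir_dist n (a i) (a ((i+k) mod m)) = xk n m a k i"
      unfolding dir_dist_def xk_def using True e lt1 by simp
    have "(int (i+k) - int i) mod int m = int k" using assms by simp
    then have "span_in B (a i) (a ((i+k) mod m)) = k"
      unfolding span_in_def using True rank assms cardB by (simp add: Let_def)
    with d show ?thesis by simp
  next
    case False
    define j where "j = i + k - m"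
    have j: "(i+k) mod m = j" "j < i" "(i+k) div m = 1" "i + k = j + m"
      using False assms unfolding j_def by (auto simp: le_mod_geq le_div_geq)
    have e: "ext n m a (i+k) = a j + n" unfolding ext_def using j by simp
    have lt1: "a j < a i" using mono j assms by simp
    have "(int (a j) - int (a i)) mod int n = (int (a j) - int (a i) + int n) mod int n" by simp
    also have "\<dots> = int (a j) - int (a i) + int n"
      using lt1 lt[OF assms(3)] by (intro mod_pos_pos_trivial) auto
    finally have d: "dir_dist n (a i) (a ((i+k) mod m)) = xk n m a k i"
      unfolding dir_dist_def xk_def using j e lt1 by simp
    have "(int j - int i) mod int m = (int j - int i + int m) mod int m" by simp
    also have "int j - int i + int m = int k" using j by simp
    also have "int k mod int m = int k" using assms by simp
    finally have "span_in B (a i) (a ((i+k) mod m)) = k"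
      unfolding span_in_def using j rank assms cardB by (simp add: Let_def)
    with d show ?thesis by simp
  qed
  then show "dir_dist n (a i) (a ((i+k) mod m)) = xk n m a k i"
    and "span_in B (a i) (a ((i+k) mod m)) = k" by auto
qed

end



lemma mod_wrap: "m \<le> t \<Longrightarrow> t < 2*m \<Longrightarrow> t mod (m::nat) = t - m"
  by (simp add: le_mod_geq)

context enum begin

lemma span_self: "span_in B u u = m"
  unfolding span_in_def using cardB by (simp add: Let_def)

lemma finB: "finite B" using img by auto

lemma sigma:
  assumes "1 \<le> k" "k < m"
  shows "sigma_vals n B k = xk n m a k ` {..<m}"
proof
  show "sigma_vals n B k \<subseteq> xk n m a k ` {..<m}"
  proof
    fix w assume "w \<in> sigma_vals n B k"
    then obtain u v where uv: "w = dir_dist n u v" "u \<in> B" "v \<in> B" "u \<noteq> v" "span_in B u v = k"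
      unfolding sigma_vals_def by blast
    obtain i where i: "i < m" "u = a i" using uv img by auto
    obtain j where j: "j < m" "v = a j" using uv img by auto
    have ij: "i \<noteq> j" using uv i j by auto
    have sp: "span_in B u v = (let r = nat ((int j - int i) mod int m) in if r = 0 then m else r)"
      unfolding span_in_def using i j rank cardB by simp
    have "j = (i + k) mod m"
    proof (cases "i < j")
      case True
      have "(int j - int i) mod int m = int j - int i" using True j by (intro mod_pos_pos_trivial) auto
      then have "k = j - i" using sp uv True by (simp add: Let_def)
      then show ?thesis using True j by simp
    next
      case False
      then have ji: "j < i" using ij by simp
      have "(int j - int i) mod int m = (int j - int i + int m) mod int m" by simp
      also have "\<dots> = int j - int i + int m" using ji i by (intro mod_pos_pos_trivial) auto
      finally have "k = j + m - i" using sp uv ji i by (simp add: Let_def)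
      then have "i + k = j + m" using ji i by simp
      then show ?thesis using j by simp
    qed
    then have "w = xk n m a k i" using key(1)[OF assms i(1)] uv i j by simp
    then show "w \<in> xk n m a k ` {..<m}" using i by auto
  qed
  show "xk n m a k ` {..<m} \<subseteq> sigma_vals n B k"
  proof
    fix w assume "w \<in> xk n m a k ` {..<m}"
    then obtain i where i: "i < m" "w = xk n m a k i" by auto
    have sp: "span_in B (a i) (a ((i+k) mod m)) = k" using key(2)[OF assms i(1)] .
    have ne: "a i \<noteq> a ((i+k) mod m)"
    proof
      assume "a i = a ((i+k) mod m)"
      then have "k = m" using sp span_self by simp
      then show False using assms by simp
    qed
    have "a i \<in> B" "a ((i+k) mod m) \<in> B" using img i m0 by auto
    moreover have "w = dir_dist n (a i) (a ((i+k) mod m))" using key(1)[OF assms i(1)] i by simp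
    ultimately show "w \<in> sigma_vals n B k" unfolding sigma_vals_def
      using sp ne by blast
  qed
qed

lemma maxeven_iff: "maximally_even n B \<longleftrightarrow> (\<forall>k\<in>{1..<m}. bal m (xk n m a k))"
proof -
  have "(\<exists>c. sigma_vals n B k \<subseteq> {c, c+1}) \<longleftrightarrow> bal m (xk n m a k)" if "1 \<le> k" "k < m" for k
    unfolding sigma[OF that] bal_def image_subset_iff by auto
  moreover have "(1 \<le> k \<and> k \<le> card B - 1) \<longleftrightarrow> (1 \<le> k \<and> k < m)" for k
    using cardB m0 by auto
  ultimately show ?thesis unfolding maximally_even_def by auto
qed

lemma reidx:
  assumes i: "i < m"
  shows "(\<Prod>j\<in>{..<m} - {i}. cyc_dist n (a i) (a j)) =
         (\<Prod>k\<in>{1..<m}. cyc_dist n (a i) (a ((i+k) mod m)))"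
proof -
  define f where "f = (\<lambda>b. if i < b then b - i else b + m - i)"
  have B: "f ((i+k) mod m) = k \<and> (i+k) mod m \<in> {..<m} - {i}" if "k \<in> {1..<m}" for k
  proof -
    from that have k: "1 \<le> k" "k < m" by auto
    show ?thesis
    proof (cases "i + k < m")
      case True then show ?thesis unfolding f_def using k by simp
    next
      case False
      then have "(i+k) mod m = i + k - m" using mod_wrap[of m "i+k"] k i by simp
      moreover have "i + k - m < i" using k i False by linarith
      ultimately show ?thesis unfolding f_def using k i False by auto
    qed
  qed
  have A: "(i + f b) mod m = b \<and> f b \<in> {1..<m}" if "b \<in> {..<m} - {i}" for b
  proof -
    from that have b: "b < m" "b \<noteq> i" by auto
    have "f b \<in> {1..<m}" unfolding f_def using b i by auto
    moreover have "(i + f b) mod m = b"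
    proof (cases "i < b")
      case True then show ?thesis unfolding f_def using b by simp
    next
      case False
      then have "i + f b = b + m" unfolding f_def using b i by simp
      then show ?thesis using b by simp
    qed
    ultimately show ?thesis by simp
  qed
  show ?thesis
    by (rule prod.reindex_bij_witness[where i = "\<lambda>k. (i+k) mod m" and j = f]) (use A B in auto)
qed

lemma prodsq: "dist_prod n B ^ 2 = (\<Prod>k\<in>{1..<m}. \<Prod>i<m. fd n (xk n m a k i))"
proof -
  define g where "g = (\<lambda>(u,v). cyc_dist n u v)"
  define P where "P = {(u, v). u \<in> B \<and> v \<in> B \<and> u < v}"
  define Q where "Q = {(u, v). u \<in> B \<and> v \<in> B \<and> u \<noteq> v}"
  define sw where "sw = (\<lambda>(u::nat,v::nat). (v,u))"
  have "P \<subseteq> B \<times> B" unfolding P_def by auto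
  then have finP: "finite P" using finB by (meson finite_SigmaI finite_subset)
  have QP: "Q = P \<union> sw ` P" unfolding Q_def P_def sw_def by auto
  have dj: "P \<inter> sw ` P = {}" unfolding P_def sw_def by auto
  have "prod g (sw ` P) = prod (g \<circ> sw) P"
    by (rule prod.reindex) (auto simp: inj_on_def sw_def)
  also have "\<dots> = prod g P" by (rule prod.cong) (auto simp: g_def sw_def cyc_sym)
  finally have swp: "prod g (sw ` P) = prod g P" .
  have dp: "dist_prod n B = prod g P" unfolding dist_prod_def g_def P_def by simp
  have s1: "dist_prod n B ^ 2 = prod g Q"
    unfolding QP dp power2_eq_square
    using prod.union_disjoint[OF finP finite_imageI[OF finP] dj, of g] swp by simp
  define R where "R = Sigma {..<m} (\<lambda>i. {..<m} - {i})"
  define h where "h = (\<lambda>(i,j). (a i, a j))"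
  have hR: "h ` R = Q"
  proof
    show "h ` R \<subseteq> Q" unfolding h_def R_def Q_def using img a_eq_iff by auto
    show "Q \<subseteq> h ` R"
    proof
      fix p assume "p \<in> Q"
      then obtain u v where p: "p = (u,v)" "u \<in> B" "v \<in> B" "u \<noteq> v" unfolding Q_def by auto
      obtain i where i: "i < m" "u = a i" using p img by auto
      obtain j where j: "j < m" "v = a j" using p img by auto
      have "(i,j) \<in> R" unfolding R_def using i j p by auto
      then show "p \<in> h ` R" unfolding h_def using p i j by force
    qed
  qed
  have injh: "inj_on h R" unfolding inj_on_def h_def R_def using a_eq_iff by auto
  have "prod g Q = prod (g \<circ> h) R" unfolding hR[symmetric] by (rule prod.reindex[OF injh])
  also have "\<dots> = (\<Prod>i<m. \<Prod>j\<in>{..<m} - {i}. cyc_dist n (a i) (a j))"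
    unfolding R_def by (subst prod.Sigma) (auto simp: g_def h_def split_def)
  also have "\<dots> = (\<Prod>i<m. \<Prod>k\<in>{1..<m}. fd n (xk n m a k i))"
  proof (rule prod.cong[OF refl])
    fix i assume "i \<in> {..<m}"
    then have i: "i < m" by simp
    show "(\<Prod>j\<in>{..<m} - {i}. cyc_dist n (a i) (a j)) = (\<Prod>k\<in>{1..<m}. fd n (xk n m a k i))"
      unfolding reidx[OF i]
    proof (rule prod.cong[OF refl])
      fix k assume "k \<in> {1..<m}"
      then have k: "1 \<le> k" "k < m" by auto
      have "(i+k) mod m < m" using m0 by simp
      then show "cyc_dist n (a i) (a ((i + k) mod m)) = fd n (xk n m a k i)"
        using cyc_fd[of "a i" n] lt i key(1)[OF k i] by simp
    qed
  qed
  also have "\<dots> = (\<Prod>k\<in>{1..<m}. \<Prod>i<m. fd n (xk n m a k i))" by (rule prod.swap)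
  finally show ?thesis using s1 by simp
qed

end



lemma enum_exists:
  assumes "B \<subseteq> {0..<n}" "card B = m" "0 < m"
  shows "\<exists>a. enum n m a B"
proof -
  define xs where "xs = sorted_list_of_set B"
  have finB: "finite B" using assms(1) finite_subset by blast
  have len: "length xs = m" unfolding xs_def using assms by simp
  have st: "sorted_wrt (<) xs" unfolding xs_def by simp
  have setx: "set xs = B" unfolding xs_def using finB by simp
  show ?thesis
  proof (intro exI[of _ "(!) xs"] enum.intro)
    show "0 < m" by fact
    show "\<And>i j. i < j \<Longrightarrow> j < m \<Longrightarrow> xs ! i < xs ! j" using st len sorted_wrt_iff_nth_less by blast
    show "(!) xs ` {..<m} = B" using setx len by (auto simp: set_conv_nth)
    show "\<And>i. i < m \<Longrightarrow> xs ! i < n" using setx len assms(1) nth_mem by fastforce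
  qed
qed

lemma div_add_bal: "0 < (m::nat) \<Longrightarrow> (x + y) div m = x div m + y div m \<or> (x + y) div m = x div m + y div m + 1"
proof -
  assume m: "0 < m"
  have "(x mod m + y mod m) < 2 * m" using m by (simp add: add_less_mono mult_2)
  then have "(x mod m + y mod m) div m < 2" by (metis less_mult_imp_div_less mult.commute)
  then show ?thesis using div_add1_eq[of x y m] by (cases "(x mod m + y mod m) div m") auto
qed

lemma even_exists:
  assumes "0 < m" "m \<le> n"
  shows "enum n m (\<lambda>i. i * n div m) ((\<lambda>i. i * n div m) ` {..<m})
     \<and> (\<forall>k\<in>{1..<m}. bal m (xk n m (\<lambda>i. i * n div m) k))"
proof
  define a where "a = (\<lambda>i. i * n div m)"
  show en: "enum n m (\<lambda>i. i * n div m) ((\<lambda>i. i * n div m) ` {..<m})"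
  proof
    show "0 < m" by fact
    show "(\<lambda>i. i * n div m) ` {..<m} = (\<lambda>i. i * n div m) ` {..<m}" ..
    fix i j assume ij: "i < j" "j < m"
    have "i * n + m \<le> j * n"
    proof -
      have "(i+1) * n \<le> j * n" using ij by (intro mult_le_mono1) simp
      then show ?thesis using assms by simp
    qed
    then have "(i * n + m) div m \<le> j * n div m" by (rule div_le_mono)
    moreover have "(i * n + m) div m = i * n div m + 1" using assms by (simp add: div_add_self2)
    ultimately show "i * n div m < j * n div m" by simp
  next
    fix i assume "i < m"
    then have "i * n < n * m" using assms by simp
    then show "i * n div m < n" using assms by (simp add: div_less_iff_less_mult)
  qed
  have ext: "ext n m a t = t * n div m" for t
  proof -
    have "t * n = (t mod m) * n + m * (n * (t div m))"
      by (metis mod_div_mult_eq add.commute add_mult_distrib mult.assoc mult.commute)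
    then have "t * n div m = (t mod m) * n div m + n * (t div m)" using assms by simp
    then show ?thesis unfolding ext_def a_def by simp
  qed
  show "\<forall>k\<in>{1..<m}. bal m (xk n m (\<lambda>i. i * n div m) k)"
  proof
    fix k assume "k \<in> {1..<m}"
    show "bal m (xk n m (\<lambda>i. i * n div m) k)" unfolding bal_def
    proof (intro exI[of _ "k * n div m"] allI impI)
      fix i assume "i < m"
      have "xk n m a k i = (i * n + k * n) div m - i * n div m"
        unfolding xk_def ext by (simp add: a_def add_mult_distrib)
      then show "xk n m (\<lambda>i. i * n div m) k i = k * n div m \<or>
          xk n m (\<lambda>i. i * n div m) k i = k * n div m + 1"
        using div_add_bal[OF assms(1), of "i*n" "k*n"] unfolding a_def by auto
    qed
  qed
qed

lemma prod_strict:
  fixes f g :: "nat \<Rightarrow> nat"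
  assumes "finite I" "\<forall>k\<in>I. f k \<le> g k" "k0 \<in> I" "f k0 < g k0" "\<forall>k\<in>I. 0 < g k"
  shows "prod f I < prod g I"
proof -
  have "prod f I = f k0 * prod f (I - {k0})" using assms by (simp add: prod.remove)
  moreover have "prod g I = g k0 * prod g (I - {k0})" using assms by (simp add: prod.remove)
  moreover have "prod f (I - {k0}) \<le> prod g (I - {k0})" using assms by (intro prod_mono) auto
  moreover have "0 < prod g (I - {k0})" using assms by (intro prod_pos) auto
  ultimately show ?thesis using assms(4)
    by (metis mult_le_mono2 mult_less_mono1 order_le_less_trans)
qed



lemma cmp:
  assumes m0: "0 < m" and mn: "m \<le> n" and Bs: "B \<subseteq> {0..<n}" and cB: "card B = m"
  shows "dist_prod n B ^ 2 \<le> dist_prod n ((\<lambda>i. i * n div m) ` {..<m}) ^ 2 \<and>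
    (dist_prod n B ^ 2 = dist_prod n ((\<lambda>i. i * n div m) ` {..<m}) ^ 2 \<longleftrightarrow> maximally_even n B)"
proof -
  define e where "e = (\<lambda>i. i * n div m)"
  define E where "E = e ` {..<m}"
  obtain a where aB: "enum n m a B" using enum_exists[OF Bs cB m0] by blast
  have enE: "enum n m e E" and balE: "\<forall>k\<in>{1..<m}. bal m (xk n m e k)"
    using even_exists[OF m0 mn] unfolding e_def E_def by auto
  define QB where "QB k = (\<Prod>i<m. fd n (xk n m a k i))" for k
  define QE where "QE k = (\<Prod>i<m. fd n (xk n m e k i))" for k
  have pB: "dist_prod n B ^ 2 = (\<Prod>k\<in>{1..<m}. QB k)" unfolding QB_def by (rule enum.prodsq[OF aB])
  have pE: "dist_prod n E ^ 2 = (\<Prod>k\<in>{1..<m}. QE k)" unfolding QE_def by (rule enum.prodsq[OF enE])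
  have cmpk: "QB k \<le> QE k \<and> (\<not> bal m (xk n m a k) \<longrightarrow> QB k < QE k)
      \<and> (bal m (xk n m a k) \<longrightarrow> QB k = QE k) \<and> 0 < QE k" if k: "k \<in> {1..<m}" for k
  proof -
    have k1: "1 \<le> k" "k < m" using k by auto
    have rE: "\<forall>i<m. 1 \<le> xk n m e k i \<and> xk n m e k i + 1 \<le> n"
      using enum.xk_bounds[OF enE k1] by blast
    have rB: "\<forall>i<m. 1 \<le> xk n m a k i \<and> xk n m a k i + 1 \<le> n"
      using enum.xk_bounds[OF aB k1] by blast
    have s: "(\<Sum>i<m. xk n m a k i) = (\<Sum>i<m. xk n m e k i)"
      using enum.xk_sum[OF aB k1(2)] enum.xk_sum[OF enE k1(2)] by simp
    have main: "QB k \<le> QE k \<and> (\<not> bal m (xk n m a k) \<longrightarrow> QB k < QE k)"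
      using bal_main[OF m0 balE[rule_format, OF k] rE, of "xk n m a k"] rB s
      unfolding QB_def QE_def by blast
    have eq: "bal m (xk n m a k) \<longrightarrow> QB k = QE k"
      using bal_formula[OF m0, of "xk n m a k" "fd n"] bal_formula[OF m0 balE[rule_format, OF k], of "fd n"] s
      unfolding QB_def QE_def by simp
    have "0 < QE k" unfolding QE_def using rE by (intro prod_pos) (auto intro: fd_pos)
    then show ?thesis using main eq by blast
  qed
  have le: "dist_prod n B ^ 2 \<le> dist_prod n E ^ 2"
    unfolding pB pE by (intro prod_mono) (use cmpk in auto)
  have iff: "dist_prod n B ^ 2 = dist_prod n E ^ 2 \<longleftrightarrow> maximally_even n B"
  proof
    assume "maximally_even n B"
    then have "\<forall>k\<in>{1..<m}. bal m (xk n m a k)" using enum.maxeven_iff[OF aB] by blast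
    then show "dist_prod n B ^ 2 = dist_prod n E ^ 2" unfolding pB pE
      by (intro prod.cong) (use cmpk in auto)
  next
    assume h: "dist_prod n B ^ 2 = dist_prod n E ^ 2"
    show "maximally_even n B"
    proof (rule ccontr)
      assume "\<not> maximally_even n B"
      then obtain k0 where k0: "k0 \<in> {1..<m}" "\<not> bal m (xk n m a k0)"
        using enum.maxeven_iff[OF aB] by blast
      have "(\<Prod>k\<in>{1..<m}. QB k) < (\<Prod>k\<in>{1..<m}. QE k)"
        using cmpk k0 by (intro prod_strict[of _ _ _ k0]) auto
      then show False using h pB pE by simp
    qed
  qed
  show ?thesis using le iff unfolding E_def e_def by simp
qed

theorem mainTheorem6:
  fixes n :: nat and A :: "nat set"
  assumes "n \<ge> 3" and "A \<subseteq> {0..<n}"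
  shows "maximally_even n A \<longleftrightarrow>
         dist_prod n A = Max {dist_prod n B | B. B \<subseteq> {0..<n} \<and> card B = card A}"
proof -
  define m where "m = card A"
  define S where "S = {dist_prod n B | B. B \<subseteq> {0..<n} \<and> card B = card A}"
  have finS: "finite S"
  proof -
    have "S \<subseteq> dist_prod n ` Pow {0..<n}" unfolding S_def by auto
    then show ?thesis by (rule finite_subset) simp
  qed
  have AS: "dist_prod n A \<in> S" unfolding S_def using assms by auto
  have mn: "m \<le> n" unfolding m_def using assms card_mono[of "{0..<n}" A] by simp
  show ?thesis
  proof (cases "m = 0")
    case True
    have finA: "finite A" using assms(2) finite_subset by blast
    have A0: "A = {}" using True finA unfolding m_def by simp
    have me: "maximally_even n A" unfolding maximally_even_def using A0 by simp
    have "S = {dist_prod n A}"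
    proof -
      have "B = {}" if "B \<subseteq> {0..<n}" "card B = 0" for B
        using that finite_subset by fastforce
      then show ?thesis unfolding S_def using A0 assms by auto
    qed
    then show ?thesis using me unfolding S_def[symmetric] by simp
  next
    case False
    then have m0: "0 < m" by simp
    define E where "E = (\<lambda>i. i * n div m) ` {..<m}"
    have enE: "enum n m (\<lambda>i. i * n div m) E" using even_exists[OF m0 mn] unfolding E_def by blast
    have cE: "card E = m" by (rule enum.cardB[OF enE])
    have Es: "E \<subseteq> {0..<n}" using enum.img[OF enE] enum.lt[OF enE] by auto
    have cA: "dist_prod n A ^ 2 \<le> dist_prod n E ^ 2 \<and>
       (dist_prod n A ^ 2 = dist_prod n E ^ 2 \<longleftrightarrow> maximally_even n A)"
      using cmp[OF m0 mn assms(2) m_def[symmetric]] unfolding E_def .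
    have ES: "dist_prod n E \<in> S" unfolding S_def using cE Es m_def by auto
    show ?thesis unfolding S_def[symmetric]
    proof
      assume me: "maximally_even n A"
      show "dist_prod n A = Max S"
      proof (rule Max_eqI[OF finS _ AS, symmetric])
        fix y assume "y \<in> S"
        then obtain B where B: "y = dist_prod n B" "B \<subseteq> {0..<n}" "card B = m"
          unfolding S_def m_def by auto
        have "dist_prod n B ^ 2 \<le> dist_prod n E ^ 2"
          using cmp[OF m0 mn B(2,3)] unfolding E_def by simp
        also have "\<dots> = dist_prod n A ^ 2" using cA me by simp
        finally show "y \<le> dist_prod n A" unfolding B(1) by (rule power2_le_imp_le) simp
      qed
    next
      assume "dist_prod n A = Max S"
      then have "dist_prod n E \<le> dist_prod n A" using Max_ge[OF finS ES] by simp
      then have "dist_prod n E ^ 2 \<le> dist_prod n A ^ 2" by (rule power_mono) simp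
      moreover have "dist_prod n A ^ 2 \<le> dist_prod n E ^ 2" using cA by blast
      ultimately have "dist_prod n A ^ 2 = dist_prod n E ^ 2" by (rule antisym[rotated])
      then show "maximally_even n A" using cA by blast
    qed
  qed
qed


end
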